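(* Let $\gamma>0$, $n\ge2$, and let $\mu$ be a distribution on $\mathbb{R}$ with $\bar\mu(x)>0$ for all $x\in\mathbb{R}$ and $\mu^{n*}\in\mathcal{S}(\gamma)$. Let $d:=\mu([0,\infty))$. Then for any sequence $\{x_k\}$ with $x_k\to\infty$ there is a subsequence $\{\lambda_k\}$ of $\{x_k\}$ belonging to $\Lambda_1$. Moreover, for every $\{\lambda_k\}\in\Lambda_1$, the function $x\mapsto m(x;\{\lambda_k\})$ is (weakly) decreasing and finite, and $$M(x;\{\lambda_k\}):=e^{\gamma x}m(x;\{\lambda_k\})\le d^{1-n}\quad\text{for all }x\in\mathbb{R}.$$
   Context: For a probability distribution $\rho$ on $\mathbb{R}$: $\bar\rho(x):=\rho((x,\infty))$, $\rho^{n*}$ is the $n$-th convolution power, $\widehat\rho(\gamma):=\int e^{\gamma x}\rho(dx)$. $f\sim g$ means $f(x)/g(x)\to1$ as $x\to\infty$. For $\gamma\ge0$: $\rho\in\mathcal{L}(\gamma)$ if $\bar\rho(x)>0$ for all $x$ and $\bar\rho(x+a)\sim e^{-\gamma a}\bar\rho(x)$ for every $a$; $\rho\in\mathcal{S}(\gamma)$ if $\rho\in\mathcal{L}(\gamma)$, $\widehat\rho(\gamma)<\infty$ and $\overline{\rho^{2*}}(x)\sim2\widehat\rho(\gamma)\bar\rho(x)$. $\Lambda_1$ is the set of increasing sequences $\{\lambda_k\}_{k\ge1}$ with $\lambda_k\to\infty$ such that for every $x\in\mathbb{R}$ the limit $m(x;\{\lambda_k\}):=\lim_{k\to\infty}\bar\mu(\lambda_k+x)/\overline{\mu^{n*}}(\lambda_k)$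 exists and is finite. *)

theory Defs
  imports "HOL-Probability.Probability" "HOL-Probability.Convolution" "HOL-Library.Landau_Symbols"
begin

definition tail :: "real measure \<Rightarrow> real \<Rightarrow> real" where
  "tail \<rho> x = measure \<rho> {x<..}"

primrec conv_pow :: "real measure \<Rightarrow> nat \<Rightarrow> real measure" where
  "conv_pow \<rho> 0 = return borel 0"
| "conv_pow \<rho> (Suc n) = convolution \<rho> (conv_pow \<rho> n)"

definition mgf :: "real measure \<Rightarrow> real \<Rightarrow> ennreal" where
  "mgf \<rho> \<gamma> = (\<integral>\<^sup>+ x. ennreal (exp (\<gamma> * x)) \<partial>\<rho>)"

definition class_L :: "real \<Rightarrow> real measure set" where
  "class_L \<gamma> = {\<rho>. (\<forall>x. tail \<rho> x > 0) \<and>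
      (\<forall>a. (\<lambda>x. tail \<rho> (x + a)) \<sim>[at_top] (\<lambda>x. exp (- \<gamma> * a) * tail \<rho> x))}"

definition class_S :: "real \<Rightarrow> real measure set" where
  "class_S \<gamma> = {\<rho>. \<rho> \<in> class_L \<gamma> \<and> mgf \<rho> \<gamma> < \<infinity> \<and>
      (\<lambda>x. tail (convolution \<rho> \<rho>) x) \<sim>[at_top] (\<lambda>x. 2 * enn2real (mgf \<rho> \<gamma>) * tail \<rho> x)}"

definition Lambda1 :: "real measure \<Rightarrow> nat \<Rightarrow> (nat \<Rightarrow> real) set" where
  "Lambda1 \<mu> n = {l. incseq l \<and> filterlim l at_top sequentially \<and>
      (\<forall>x. convergent (\<lambda>k. tail \<mu> (l k + x) / tail (conv_pow \<mu> n) (l k)))}"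

definition mlim :: "real measure \<Rightarrow> nat \<Rightarrow> (nat \<Rightarrow> real) \<Rightarrow> real \<Rightarrow> real" where
  "mlim \<mu> n l x = lim (\<lambda>k. tail \<mu> (l k + x) / tail (conv_pow \<mu> n) (l k))"

end

theory Submission imports Defs "HOL-Probability.Helly_Selection"
begin

lemma prob_conv:
  fixes M N :: "real measure"
  assumes "prob_space M" "prob_space N" "sets M = sets borel" "sets N = sets borel"
  shows "prob_space (convolution M N)"
proof -
  interpret M: prob_space M by fact
  interpret N: prob_space N by fact
  interpret P: pair_prob_space M N ..
  show ?thesis unfolding convolution_def
    by (rule P.prob_space_distr) (simp add: assms measurable_cong_sets[OF sets_pair_measure_cong[OF assms(3,4)] refl])
qed

lemma conv_pow_prob:
  assumes "prob_space M" "sets M = sets borel"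
  shows "prob_space (conv_pow M k) \<and> sets (conv_pow M k) = sets borel"
proof (induction k)
  case 0 then show ?case by (simp add: prob_space_return)
next
  case (Suc k) then show ?case using prob_conv[of M "conv_pow M k"] assms by simp
qed

lemma conv_ge:
  fixes M N :: "real measure"
  assumes "prob_space M" "prob_space N" "sets M = sets borel" "sets N = sets borel"
    and "A \<in> sets borel" "B \<in> sets borel" "C \<in> sets borel"
    and "\<And>a b. a \<in> A \<Longrightarrow> b \<in> B \<Longrightarrow> a + b \<in> C"
  shows "measure M A * measure N B \<le> measure (convolution M N) C"
proof -
  interpret M: prob_space M by fact
  interpret N: prob_space N by fact
  interpret P: pair_prob_space M N ..
  have meas: "(\<lambda>(x::real, y). x + y) \<in> measurable (M \<Otimes>\<^sub>M N) borel"
    by (simp add: assms measurable_cong_sets[OF sets_pair_measure_cong[OF assms(3,4)] refl])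
  have "measure (convolution M N) C = measure (M \<Otimes>\<^sub>M N) ((\<lambda>(x, y). x + y) -` C \<inter> space (M \<Otimes>\<^sub>M N))"
    unfolding convolution_def using meas assms by (simp add: measure_distr)
  also have "\<dots> \<ge> measure (M \<Otimes>\<^sub>M N) (A \<times> B)"
  proof (rule P.finite_measure_mono)
    show "A \<times> B \<subseteq> (\<lambda>(x, y). x + y) -` C \<inter> space (M \<Otimes>\<^sub>M N)"
      using assms(8) by (auto simp: space_pair_measure assms(3,4) cong: sets_eq_imp_space_eq)
    show "(\<lambda>(x, y). x + y) -` C \<inter> space (M \<Otimes>\<^sub>M N) \<in> sets (M \<Otimes>\<^sub>M N)"
      using meas assms(7) by (rule measurable_sets)
  qed
  also have "measure (M \<Otimes>\<^sub>M N) (A \<times> B) = measure M A * measure N B"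
    using assms N.emeasure_pair_measure_Times[of A M B]
    by (simp add: measure_def enn2real_mult)
  finally show ?thesis .
qed

lemma pos_mass:
  fixes M :: "real measure"
  assumes "prob_space M" "sets M = sets borel"
  shows "measure M {0..} ^ m \<le> measure (conv_pow M m) {0..}"
proof (induction m)
  case 0 then show ?case by (simp add: measure_return)
next
  case (Suc m)
  have P: "prob_space (conv_pow M m)" "sets (conv_pow M m) = sets borel"
    using conv_pow_prob[OF assms] by auto
  have "measure M {0..} ^ Suc m = measure M {0..} * measure M {0..} ^ m" by simp
  also have "\<dots> \<le> measure M {0..} * measure (conv_pow M m) {0..}"
    using Suc by (intro mult_left_mono) auto
  also have "\<dots> \<le> measure (convolution M (conv_pow M m)) {0..}"
    by (rule conv_ge[OF assms(1) P(1) assms(2) P(2)]) auto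
  finally show ?case by simp
qed

lemma tail_bound:
  fixes M :: "real measure"
  assumes "prob_space M" "sets M = sets borel"
  shows "tail M x * measure M {0..} ^ m \<le> tail (conv_pow M (Suc m)) x"
proof -
  have P: "prob_space (conv_pow M m)" "sets (conv_pow M m) = sets borel"
    using conv_pow_prob[OF assms] by auto
  have "tail M x * measure M {0..} ^ m \<le> tail M x * measure (conv_pow M m) {0..}"
    using pos_mass[OF assms] by (intro mult_left_mono) (auto simp: tail_def)
  also have "\<dots> \<le> measure (convolution M (conv_pow M m)) {x<..}"
    unfolding tail_def by (rule conv_ge[OF assms(1) P(1) assms(2) P(2)]) auto
  finally show ?thesis by (simp add: tail_def)
qed

lemma diag_conv:
  fixes f :: "nat \<Rightarrow> real \<Rightarrow> real"
  assumes "countable D" "\<And>x. x \<in> D \<Longrightarrow> Bseq (\<lambda>k. f k x)"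
  shows "\<exists>s. strict_mono s \<and> (\<forall>x\<in>D. convergent (\<lambda>k. f (s k) x))"
proof (cases "D = {}")
  case True then show ?thesis by (auto intro: strict_mono_id)
next
  case False
  define r where "r = from_nat_into D"
  have rD: "range r = D" using False assms(1) by (simp add: r_def)
  let ?P = "\<lambda>n. \<lambda>s. convergent (\<lambda>k. f (s k) (r n))"
  interpret nat: subseqs ?P
  proof (unfold subseqs_def, safe)
    fix n :: nat and s :: "nat \<Rightarrow> nat" assume s: "strict_mono s"
    have B: "Bseq (\<lambda>k. f (s k) (r n))"
      using assms(2)[of "r n"] rD by (auto intro: Bseq_subseq)
    obtain s' where s': "strict_mono s'" "monoseq (\<lambda>k. f (s (s' k)) (r n))"
      using seq_monosub[of "\<lambda>k. f (s k) (r n)"] by auto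
    have "convergent (\<lambda>k. f (s (s' k)) (r n))"
      using B s' by (intro Bseq_monoseq_convergent) (auto intro: Bseq_subseq)
    then show "\<exists>r'. strict_mono r' \<and> convergent (\<lambda>k. f ((s \<circ> r') k) (r n))"
      using s' by auto
  qed
  define d where "d = nat.diagseq"
  have subseq: "strict_mono d"
    unfolding d_def using nat.subseq_diagseq by auto
  have rat_cnv: "?P n d" for n
  proof -
    have Pn_seqseq: "?P n (nat.seqseq (Suc n))"
      by (rule nat.seqseq_holds)
    have 1: "(\<lambda>k. f ((nat.seqseq (Suc n) \<circ> (\<lambda>k. nat.fold_reduce (Suc n) k
      (Suc n + k))) k) (r n)) = (\<lambda>k. f (nat.seqseq (Suc n) k) (r n)) \<circ>
      (\<lambda>k. nat.fold_reduce (Suc n) k (Suc n + k))"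
      by auto
    have 2: "?P n (d \<circ> ((+) (Suc n)))"
      unfolding d_def nat.diagseq_seqseq 1
      by (intro convergent_subseq_convergent Pn_seqseq nat.subseq_diagonal_rest)
    then obtain L where 3: "(\<lambda>na. f (d (na + Suc n)) (r n)) \<longlonglongrightarrow> L"
      by (auto simp: add.commute dest: convergentD)
    then have "(\<lambda>k. f (d k) (r n)) \<longlonglongrightarrow> L"
      by (rule LIMSEQ_offset)
    then show ?thesis
      by (auto simp: convergent_def)
  qed
  show ?thesis using subseq rat_cnv rD by auto
qed

lemma select_all:
  fixes f :: "nat \<Rightarrow> real \<Rightarrow> real"
  assumes anti: "\<And>k. antimono (f k)"
    and rc: "\<And>k x. continuous (at_right x) (f k)"
    and nn: "\<And>k x. 0 \<le> f k x"
    and bd: "\<And>x. Bseq (\<lambda>k. f k x)"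
  shows "\<exists>s. strict_mono s \<and> (\<forall>x. convergent (\<lambda>k. f (s k) x))"
proof -
  define g where "g k x = - (f k x / (1 + f k x))" for k x
  have grc: "continuous (at_right x) (g k)" for k x
  proof -
    have "continuous (at_right x) (\<lambda>y. - (f k y / (1 + f k y)))"
      using rc nn by (intro continuous_intros) (auto, smt (verit) nn)
    then show ?thesis by (simp add: g_def[abs_def])
  qed
  have gmono: "mono (g k)" for k
  proof (rule monoI)
    fix x y :: real assume "x \<le> y"
    then have "f k y \<le> f k x" using anti[of k] by (auto simp: antimono_def)
    moreover have "0 \<le> f k y" "0 \<le> f k x" using nn by auto
    ultimately show "g k x \<le> g k y" unfolding g_def by (simp add: field_simps)
  qed
  have gbd: "\<bar>g k x\<bar> \<le> 1" for k x
    using nn[of k x] unfolding g_def by (simp add: field_simps)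
  obtain s F where s: "strict_mono s" and F: "mono F"
    and Fl: "\<And>x. continuous (at x) F \<Longrightarrow> (\<lambda>n. g (s n) x) \<longlonglongrightarrow> F x"
    using Helly_selection[of g 1, OF grc gmono gbd] by blast
  define D where "D = {x. \<not> isCont F x}"
  have cD: "countable D" unfolding D_def by (rule mono_ctble_discont[OF F])
  obtain s2 where s2: "strict_mono s2" and c2: "\<forall>x\<in>D. convergent (\<lambda>k. f (s (s2 k)) x)"
    using diag_conv[OF cD, of "\<lambda>(k::nat) (x::real). f (s k) x"] Bseq_subseq[OF bd] by blast
  have "convergent (\<lambda>k. f (s (s2 k)) x)" for x
  proof (cases "x \<in> D")
    case True then show ?thesis using c2 by auto
  next
    case False
    then have gl: "(\<lambda>n. g (s n) x) \<longlonglongrightarrow> F x" using Fl D_def by auto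
    obtain B where B: "B > 0" "\<And>k. norm (f k x) \<le> B" using bd[of x] by (auto elim: BseqE)
    have "\<forall>n. - (B / (1 + B)) \<le> g (s n) x"
    proof
      fix n
      have "f (s n) x \<le> B" "0 \<le> f (s n) x" using B(2)[of "s n"] nn by auto
      then show "- (B / (1 + B)) \<le> g (s n) x" using B(1) unfolding g_def
        by (simp add: field_simps)
    qed
    then have "- (B / (1 + B)) \<le> F x" using gl by (intro LIMSEQ_le_const) auto
    then have ne: "1 + F x \<noteq> 0"
    proof (intro notI)
      assume a: "- (B / (1 + B)) \<le> F x" and "1 + F x = 0"
      then have "F x = -1" by simp
      then have "B / (1 + B) \<ge> 1" using a by simp
      then show False using B(1) by (simp add: field_simps)
    qed
    have eq: "f k x = - g k x / (1 + g k x)" for k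
      using nn[of k x] unfolding g_def by (simp add: field_simps)
    have "(\<lambda>n. - g (s n) x / (1 + g (s n) x)) \<longlonglongrightarrow> - F x / (1 + F x)"
      using gl ne by (intro tendsto_intros) auto
    then have "convergent (\<lambda>n. f (s n) x)" unfolding eq[symmetric] by (auto simp: convergent_def)
    then show ?thesis using s2 by (rule convergent_subseq_convergent[unfolded comp_def])
  qed
  then show ?thesis using s s2 by (auto intro!: exI[of _ "s \<circ> s2"] strict_mono_o)
qed

lemma tail_antimono:
  fixes M :: "real measure"
  assumes "prob_space M" "sets M = sets borel" "x \<le> y"
  shows "tail M y \<le> tail M x"
proof -
  interpret prob_space M by fact
  show ?thesis unfolding tail_def using assms(2,3)
    by (intro finite_measure_mono) auto
qed

lemma tail_rc:
  fixes M :: "real measure"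
  assumes "prob_space M" "sets M = sets borel"
  shows "continuous (at_right x) (\<lambda>y. tail M (c + y))"
proof -
  interpret real_distribution M using assms by (simp add: real_distribution_def real_distribution_axioms_def)
  have sp: "space M = UNIV" using assms(2) sets_eq_imp_space_eq by fastforce
  have eq: "tail M y = 1 - cdf M y" for y
  proof -
    have "{y<..} = space M - {..y}" using sp by auto
    then show ?thesis unfolding tail_def cdf_def2 using assms(2) by (metis prob_compl sp atMost_borel)
  qed
  have fm: "filtermap (\<lambda>y. c + y) (at_right x) = at_right (c + x)"
    by (simp add: at_right_to_0[of x] at_right_to_0[of "c+x"] filtermap_filtermap add_ac)
  have "(cdf M \<longlongrightarrow> cdf M (c + x)) (at_right (c + x))"
    using cdf_is_right_cont[of "c + x"] by (simp add: continuous_within)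
  then have "((\<lambda>y. cdf M (c + y)) \<longlongrightarrow> cdf M (c + x)) (at_right x)"
    unfolding fm[symmetric] tendsto_compose_filtermap[symmetric] by (simp add: comp_def)
  then have "((\<lambda>y. 1 - cdf M (c + y)) \<longlongrightarrow> 1 - cdf M (c + x)) (at_right x)"
    by (intro tendsto_intros)
  then show ?thesis by (simp add: continuous_within eq)
qed

lemma ratio_lim:
  assumes L: "\<nu> \<in> class_L \<gamma>" and l: "filterlim l at_top sequentially"
  shows "(\<lambda>k. tail \<nu> (l k + x) / tail \<nu> (l k)) \<longlonglongrightarrow> exp (- \<gamma> * x)"
proof -
  have pos: "\<And>y. tail \<nu> y > 0" and eq: "(\<lambda>t. tail \<nu> (t + x)) \<sim>[at_top] (\<lambda>t. exp (- \<gamma> * x) * tail \<nu> t)"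
    using L by (auto simp: class_L_def)
  have "((\<lambda>t. tail \<nu> (t + x) / (exp (- \<gamma> * x) * tail \<nu> t)) \<longlongrightarrow> 1) at_top"
    using pos by (intro asymp_equivD_strong[OF eq]) (auto intro!: always_eventually simp: less_imp_neq[symmetric])
  then have "((\<lambda>k. tail \<nu> (l k + x) / (exp (- \<gamma> * x) * tail \<nu> (l k))) \<longlongrightarrow> 1) sequentially"
    using l by (rule filterlim_compose)
  then have "((\<lambda>k. exp (- \<gamma> * x) * (tail \<nu> (l k + x) / (exp (- \<gamma> * x) * tail \<nu> (l k)))) \<longlongrightarrow> exp (- \<gamma> * x) * 1) sequentially"
    by (intro tendsto_intros)
  then show ?thesis by simp
qed

theorem lemma5p1:
  fixes \<mu> :: "real measure" and \<gamma> :: real and n :: nat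
  assumes "prob_space \<mu>" and "sets \<mu> = sets borel"
    and "\<gamma> > 0" and "n \<ge> 2"
    and "\<forall>x. tail \<mu> x > 0"
    and "conv_pow \<mu> n \<in> class_S \<gamma>"
  defines "d \<equiv> measure \<mu> {0..}"
  shows "(\<forall>xs :: nat \<Rightarrow> real. filterlim xs at_top sequentially \<longrightarrow>
            (\<exists>r. strict_mono r \<and> xs \<circ> r \<in> Lambda1 \<mu> n))
       \<and> (\<forall>l \<in> Lambda1 \<mu> n. antimono (mlim \<mu> n l) \<and>
            (\<forall>x. exp (\<gamma> * x) * mlim \<mu> n l x \<le> (1 / d) ^ (n - 1)))"
proof -
  define m where "m = n - 1"
  have nm: "n = Suc m" using assms(4) by (simp add: m_def)
  define \<nu> where "\<nu> = conv_pow \<mu> n"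
  have L: "\<nu> \<in> class_L \<gamma>" using assms(6) by (simp add: \<nu>_def class_S_def)
  have npos: "\<And>y. tail \<nu> y > 0" using L by (simp add: class_L_def)
  interpret P: prob_space \<mu> by fact
  have dpos: "d > 0"
  proof -
    have "tail \<mu> 0 \<le> d" unfolding tail_def d_def using assms(2)
      by (intro P.finite_measure_mono) auto
    then show ?thesis using assms(5) by (smt (verit))
  qed
  have tb: "tail \<mu> y \<le> (1/d)^m * tail \<nu> y" for y
  proof -
    have "tail \<mu> y * d ^ m \<le> tail \<nu> y"
      using tail_bound[OF assms(1,2), of y m] by (simp add: \<nu>_def nm d_def)
    then show ?thesis using dpos by (simp add: field_simps power_divide)
  qed
  define f where "f l k x = tail \<mu> (l k + x) / tail \<nu> (l k)" for l :: "nat \<Rightarrow> real" and k x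
  have f_nn: "0 \<le> f l k x" for l k x
    unfolding f_def using npos[of "l k"] by (simp add: tail_def)
  have f_anti: "x \<le> y \<Longrightarrow> f l k y \<le> f l k x" for l k x y
    unfolding f_def using npos[of "l k"] tail_antimono[OF assms(1,2), of "l k + x" "l k + y"]
    by (simp add: divide_right_mono)
  have f_le: "f l k x \<le> (1/d)^m * (tail \<nu> (l k + x) / tail \<nu> (l k))" for l k x
    unfolding f_def using npos[of "l k"] tb[of "l k + x"] by (simp add: divide_right_mono)
  have rl: "filterlim l at_top sequentially \<Longrightarrow>
      (\<lambda>k. (1/d)^m * (tail \<nu> (l k + x) / tail \<nu> (l k))) \<longlonglongrightarrow> (1/d)^m * exp (- \<gamma> * x)" for l x
    by (intro tendsto_intros ratio_lim[OF L])
  have part1: "\<exists>r. strict_mono r \<and> xs \<circ> r \<in> Lambda1 \<mu> n" if xs: "filterlim xs at_top sequentially" for xs :: "nat \<Rightarrow> real"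
  proof -
    obtain r0 where r0: "strict_mono r0" and mo: "monoseq (\<lambda>k. xs (r0 k))"
      using seq_monosub[of xs] by blast
    define l0 where "l0 = xs \<circ> r0"
    have l0t: "filterlim l0 at_top sequentially"
      unfolding l0_def comp_def by (rule filterlim_compose[OF xs filterlim_subseq[OF r0]])
    have l0i: "incseq l0"
    proof -
      have "\<not> decseq l0"
      proof
        assume dec: "decseq l0"
        have "eventually (\<lambda>k. l0 k > l0 0) sequentially"
          using l0t by (simp add: filterlim_at_top_dense)
        then obtain k where "l0 k > l0 0" by (auto dest: eventually_happens)
        then show False using dec by (metis decseqD le0 not_le)
      qed
      then show ?thesis using mo by (auto simp: monoseq_iff l0_def comp_def)
    qed
    have bs: "Bseq (\<lambda>k. f l0 k x)" for x
    proof -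
      have "convergent (\<lambda>k. (1/d)^m * (tail \<nu> (l0 k + x) / tail \<nu> (l0 k)))"
        using rl[OF l0t] by (auto simp: convergent_def)
      then have "Bseq (\<lambda>k. (1/d)^m * (tail \<nu> (l0 k + x) / tail \<nu> (l0 k)))"
        by (rule convergent_imp_Bseq)
      then obtain B where B: "\<forall>k. norm ((1/d)^m * (tail \<nu> (l0 k + x) / tail \<nu> (l0 k))) \<le> B"
        by (rule BseqE) blast
      have "norm (f l0 k x) \<le> B" for k
      proof -
        have "f l0 k x \<le> norm ((1/d)^m * (tail \<nu> (l0 k + x) / tail \<nu> (l0 k)))"
          using f_le[of l0 k x] unfolding real_norm_def by (rule order_trans) (rule abs_ge_self)
        then show ?thesis using spec[OF B, of k] f_nn[of l0 k x] by simp
      qed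
      then show ?thesis by (intro BseqI'[of _ B]) auto
    qed
    have rc: "continuous (at_right x) (f l0 k)" for k x
    proof -
      have "continuous (at_right x) (\<lambda>y. tail \<mu> (l0 k + y) / tail \<nu> (l0 k))"
        by (intro continuous_intros tail_rc[OF assms(1,2)]) (use npos[of "l0 k"] in auto)
      then show ?thesis by (simp add: f_def[abs_def])
    qed
    obtain s where s: "strict_mono s" and cs: "\<forall>x. convergent (\<lambda>k. f l0 (s k) x)"
    proof -
      have "\<exists>s. strict_mono s \<and> (\<forall>x. convergent (\<lambda>k. f l0 (s k) x))"
      proof (rule select_all)
        show "antimono (f l0 k)" for k by (rule antimonoI) (rule f_anti)
      qed (rule rc, rule f_nn, rule bs)
      then show ?thesis using that by blast
    qed
    have "xs \<circ> (r0 \<circ> s) \<in> Lambda1 \<mu> n"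
      unfolding Lambda1_def
    proof (safe)
      show "incseq (xs \<circ> (r0 \<circ> s))"
        using l0i s by (auto simp: incseq_def l0_def strict_mono_leD)
      show "filterlim (xs \<circ> (r0 \<circ> s)) at_top sequentially"
        using filterlim_compose[OF l0t filterlim_subseq[OF s]] by (simp add: l0_def comp_def)
      fix x
      show "convergent (\<lambda>k. tail \<mu> ((xs \<circ> (r0 \<circ> s)) k + x) / tail (conv_pow \<mu> n) ((xs \<circ> (r0 \<circ> s)) k))"
        using cs[rule_format, of x] by (simp add: f_def l0_def \<nu>_def)
    qed
    then show ?thesis using r0 s by (auto intro!: exI[of _ "r0 \<circ> s"] strict_mono_o)
  qed
  have part2: "antimono (mlim \<mu> n l) \<and> (\<forall>x. exp (\<gamma> * x) * mlim \<mu> n l x \<le> (1 / d) ^ (n - 1))"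
    if l: "l \<in> Lambda1 \<mu> n" for l
  proof -
    have lt: "filterlim l at_top sequentially" and cv: "\<And>x. convergent (\<lambda>k. f l k x)"
      using l by (auto simp: Lambda1_def f_def[abs_def] \<nu>_def)
    have ml: "mlim \<mu> n l x = lim (\<lambda>k. f l k x)" for x
      by (simp add: mlim_def f_def \<nu>_def)
    have lim: "(\<lambda>k. f l k x) \<longlonglongrightarrow> mlim \<mu> n l x" for x
      using cv[of x] by (simp add: ml convergent_LIMSEQ_iff)
    have "antimono (mlim \<mu> n l)"
    proof (rule antimonoI)
      fix x y :: real assume "x \<le> y"
      then show "mlim \<mu> n l y \<le> mlim \<mu> n l x"
        using f_anti by (intro LIMSEQ_le[OF lim lim]) auto
    qed
    moreover have "exp (\<gamma> * x) * mlim \<mu> n l x \<le> (1 / d) ^ (n - 1)" for x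
    proof -
      have "mlim \<mu> n l x \<le> (1/d)^m * exp (- \<gamma> * x)"
        using f_le by (intro LIMSEQ_le[OF lim rl[OF lt]]) auto
      then have "exp (\<gamma> * x) * mlim \<mu> n l x \<le> exp (\<gamma> * x) * ((1/d)^m * exp (- \<gamma> * x))"
        by (intro mult_left_mono) auto
      also have "\<dots> = (1/d)^m" by (simp add: exp_minus field_simps)
      finally show ?thesis by (simp add: m_def)
    qed
    ultimately show ?thesis by blast
  qed
  show ?thesis using part1 part2 by blast
qed

end
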